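(* Given an instance with goods and identical valuations (all agents have the same value function $v$ on items and the same quantile $\tau$) with $m=kn$, the greedy algorithm below returns a balanced allocation of maximum utilitarian social welfare among balanced allocations. Greedy algorithm: set $P\leftarrow M$, $N'\leftarrow N$, and $k_i\leftarrow\min(k,\,k-\lceil\tau_i k\rceil+1)$ for each $i$. While $P\neq\emptyset$: for each $i\in N'$ let $S_i$ be a subset of $P$ of size $k_i$ maximizing $\sum_{g\in S_i}v_i(g)$; let $i^*\in N'$ maximize $v_{i^*}(S_{i^*})$; set $A_{i^*}\leftarrow S_{i^*}$, $P\leftarrow P\setminus A_{i^*}$, $N'\leftarrow N'\setminus\{i^*\}$. Finally allocate any remaining items arbitrarily so that $|A_i|=k$ for all $i\in N$.
   Context: There is a set $N$ of $n$ agents and a set $M$ of $m$ indivisible items. Each agent $i$ has a value $v_i(g)\ge0$ for each item and a quantile $\tau_i\in[0,1]$; here $v_i=v$ and $\tau_i=\tau$ for all $i$. For a nonempty bundle $S\subseteq M$, order its items as $g_1,\dots,g_{|S|}$ with $v_i(g_1)\le\dots\le v_i(g_{|S|})$; then $v_i(S)=v_i(g_{\lceil \tau_i|S|\rceil})$ if $\tau_i>0$ and $v_i(S)=v_i(g_1)$ if $\tau_i=0$. An allocation is an $n$-partition $A=(A_1,\dots,A_n)$ of $M$; when $m=kn$ it is balanced if $|A_i|=k$ for all $i$. $\mathrm{USW}(A)=\sum_{i\in N}v_i(A_i)$. *)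

theory Defs
  imports Complex_Main "HOL-Library.Multiset"
begin

text \<open>Items sorted by value increasingly (as a sorted list of values, a multiset);
  the value of position ceil(tau |S|) (1-based) if tau > 0, else the smallest value.
  The empty bundle (never arising for k >= 1) gets value 0 by convention.\<close>
definition qval :: "('b \<Rightarrow> real) \<Rightarrow> real \<Rightarrow> 'b set \<Rightarrow> real" where
  "qval v \<tau> S =
     (if S = {} then 0
      else (let xs = sorted_list_of_multiset (image_mset v (mset_set S));
                j = (if \<tau> > 0 then nat \<lceil>\<tau> * real (card S)\<rceil> - 1 else 0)
            in xs ! j))"

definition is_allocation :: "'a set \<Rightarrow> 'b set \<Rightarrow> ('a \<Rightarrow> 'b set) \<Rightarrow> bool" where
  "is_allocation N M A \<longleftrightarrow>
     (\<Union>i\<in>N. A i) = M \<and> (\<forall>i\<in>N. \<forall>j\<in>N. i \<noteq> j \<longrightarrow> A i \<inter> A j = {})"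

definition balanced_allocation :: "'a set \<Rightarrow> 'b set \<Rightarrow> nat \<Rightarrow> ('a \<Rightarrow> 'b set) \<Rightarrow> bool" where
  "balanced_allocation N M k A \<longleftrightarrow> is_allocation N M A \<and> (\<forall>i\<in>N. card (A i) = k)"

definition USW :: "'a set \<Rightarrow> ('b \<Rightarrow> real) \<Rightarrow> real \<Rightarrow> ('a \<Rightarrow> 'b set) \<Rightarrow> real" where
  "USW N v \<tau> A = (\<Sum>i\<in>N. qval v \<tau> (A i))"

definition greedy_size :: "nat \<Rightarrow> real \<Rightarrow> nat" where
  "greedy_size k \<tau> = nat (min (int k) (int k - \<lceil>\<tau> * real k\<rceil> + 1))"

text \<open>A run of the greedy algorithm: in round t (t < n) the remaining items are
  M minus the bundles already assigned, the remaining agents are N minus the agents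
  already served; C t i is the candidate bundle S_i computed for agent i in round t,
  and sigma t is the agent i* selected in round t.\<close>
definition greedy_run ::
  "'a set \<Rightarrow> 'b set \<Rightarrow> ('b \<Rightarrow> real) \<Rightarrow> real \<Rightarrow> nat \<Rightarrow>
   (nat \<Rightarrow> 'a \<Rightarrow> 'b set) \<Rightarrow> (nat \<Rightarrow> 'a) \<Rightarrow> ('a \<Rightarrow> 'b set) \<Rightarrow> bool" where
  "greedy_run N M v \<tau> k C \<sigma> A \<longleftrightarrow>
     (let kk = greedy_size k \<tau>;
          P = (\<lambda>t. M - (\<Union>s<t. C s (\<sigma> s)));
          N' = (\<lambda>t. N - \<sigma> ` {..<t})
      in (\<forall>t < card N.
            \<sigma> t \<in> N' t \<and>
            (\<forall>i\<in>N' t. C t i \<subseteq> P t \<and> card (C t i) = kk \<and>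
               (\<forall>S. S \<subseteq> P t \<and> card S = kk \<longrightarrow> (\<Sum>g\<in>S. v g) \<le> (\<Sum>g\<in>C t i. v g))) \<and>
            (\<forall>i\<in>N' t. qval v \<tau> (C t i) \<le> qval v \<tau> (C t (\<sigma> t))) \<and>
            C t (\<sigma> t) \<subseteq> A (\<sigma> t))
         \<and> balanced_allocation N M k A)"

end

theory Submission
  imports Defs
begin

lemma card_filter_sorted:
  assumes "finite S"
  shows "card {g\<in>S. P (v g)} =
    card {i. i < card S \<and> P (sorted_list_of_multiset (image_mset v (mset_set S)) ! i)}"
proof -
  let ?xs = "sorted_list_of_multiset (image_mset v (mset_set S))"
  have "length (filter P ?xs) = size (filter_mset P (image_mset v (mset_set S)))"
    by (metis mset_filter mset_sorted_list_of_multiset size_mset)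
  also have "\<dots> = size (mset_set {g\<in>S. P (v g)})"
    using assms by (simp add: filter_mset_image_mset filter_mset_mset_set)
  also have "\<dots> = card {g\<in>S. P (v g)}" by simp
  finally have "card {g\<in>S. P (v g)} = length (filter P ?xs)" by simp
  also have "\<dots> = card {i. i < length ?xs \<and> P (?xs ! i)}" by (rule length_filter_conv_card)
  also have "length ?xs = card S" 
    by (metis mset_sorted_list_of_multiset size_mset size_image_mset size_mset_set)
  finally show ?thesis .
qed

lemma gs_props:
  assumes "1 \<le> k" "0 \<le> \<tau>" "\<tau> \<le> 1"
  shows "1 \<le> greedy_size k \<tau>" "greedy_size k \<tau> \<le> k"
    "(if \<tau> > 0 then nat \<lceil>\<tau> * real k\<rceil> - 1 else 0) = k - greedy_size k \<tau>"
proof -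
  have "0 \<le> \<tau> * real k" using assms by simp
  hence c0: "0 \<le> \<lceil>\<tau> * real k\<rceil>" by (metis ceiling_mono ceiling_zero)
  have ck: "\<lceil>\<tau> * real k\<rceil> \<le> int k"
    using assms by (simp add: ceiling_le_iff mult_left_le_one_le)
  have cpos: "\<tau> > 0 \<Longrightarrow> 1 \<le> \<lceil>\<tau> * real k\<rceil>" using assms
    by (simp add: one_le_ceiling)
  have cz: "\<tau> = 0 \<Longrightarrow> \<lceil>\<tau> * real k\<rceil> = 0" by simp
  show "1 \<le> greedy_size k \<tau>" "greedy_size k \<tau> \<le> k"
    using c0 ck assms unfolding greedy_size_def by auto
  show "(if \<tau> > 0 then nat \<lceil>\<tau> * real k\<rceil> - 1 else 0) = k - greedy_size k \<tau>"
    using c0 ck cpos cz assms unfolding greedy_size_def by auto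
qed

lemma qval_count:
  assumes "finite S" "card S = k" "1 \<le> k" "0 \<le> \<tau>" "\<tau> \<le> 1"
  shows "greedy_size k \<tau> \<le> card {g\<in>S. qval v \<tau> S \<le> v g}"
    and "greedy_size k \<tau> \<le> card {g\<in>S. x \<le> v g} \<Longrightarrow> x \<le> qval v \<tau> S"
proof -
  let ?xs = "sorted_list_of_multiset (image_mset v (mset_set S))"
  let ?r = "greedy_size k \<tau>"
  have ne: "S \<noteq> {}" using assms by auto
  have q0: "qval v \<tau> S = ?xs ! (if \<tau> > 0 then nat \<lceil>\<tau> * real (card S)\<rceil> - 1 else 0)"
    using ne unfolding qval_def Let_def by simp
  have q: "qval v \<tau> S = ?xs ! (k - ?r)"
    using q0 gs_props(3)[OF assms(3-5)] assms(2) by metis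
  have len: "length ?xs = k"
    by (metis assms(2) mset_sorted_list_of_multiset size_mset size_image_mset size_mset_set)
  have srt: "sorted ?xs" by simp
  have r1: "1 \<le> ?r" "?r \<le> k" using gs_props[OF assms(3-5)] by auto
  have "{k - ?r..<k} \<subseteq> {i. i < card S \<and> qval v \<tau> S \<le> ?xs ! i}"
    using q srt len assms(2) by (auto simp: sorted_iff_nth_mono)
  hence "card {k - ?r..<k} \<le> card {i. i < card S \<and> qval v \<tau> S \<le> ?xs ! i}"
    by (intro card_mono) auto
  then show "?r \<le> card {g\<in>S. qval v \<tau> S \<le> v g}"
    using card_filter_sorted[OF assms(1), of "\<lambda>y. qval v \<tau> S \<le> y" v] r1 by simp
  assume h: "?r \<le> card {g\<in>S. x \<le> v g}"
  show "x \<le> qval v \<tau> S"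
  proof (rule ccontr)
    assume "\<not> x \<le> qval v \<tau> S"
    hence lt: "?xs ! (k - ?r) < x" using q by simp
    have "{i. i < card S \<and> x \<le> ?xs ! i} \<subseteq> {k - ?r + 1..<k}"
    proof
      fix i assume i: "i \<in> {i. i < card S \<and> x \<le> ?xs ! i}"
      have "\<not> i \<le> k - ?r"
      proof
        assume "i \<le> k - ?r"
        hence "?xs ! i \<le> ?xs ! (k - ?r)" using srt len r1 by (auto simp: sorted_iff_nth_mono)
        thus False using i lt by simp
      qed
      thus "i \<in> {k - ?r + 1..<k}" using i assms(2) by auto
    qed
    hence "card {i. i < card S \<and> x \<le> ?xs ! i} \<le> card {k - ?r + 1..<k}"
      by (intro card_mono) auto
    hence "card {g\<in>S. x \<le> v g} < ?r"
      using card_filter_sorted[OF assms(1), of "\<lambda>y. x \<le> y" v] r1 by simp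
    thus False using h by simp
  qed
qed

lemma sum_le_by_counts:
  fixes q :: "'a \<Rightarrow> real" and c :: "'c \<Rightarrow> real"
  assumes "finite I" "finite J" "card I = card J"
    "\<And>x. card {i\<in>I. x \<le> q i} \<le> card {j\<in>J. x \<le> c j}"
  shows "sum q I \<le> sum c J"
  using assms
proof (induction "card I" arbitrary: I J)
  case 0
  then show ?case by simp
next
  case (Suc n)
  have "I \<noteq> {}" "J \<noteq> {}" using Suc by auto
  have "Max (q ` I) \<in> q ` I" using Suc.prems(1) \<open>I \<noteq> {}\<close> by (intro Max_in) auto
  then obtain i0 where i0a: "i0 \<in> I" "q i0 = Max (q ` I)" by auto
  have i0: "i0 \<in> I" "\<forall>i\<in>I. q i \<le> q i0" using i0a Suc.prems(1) by auto
  have "Max (c ` J) \<in> c ` J" using Suc.prems(2) \<open>J \<noteq> {}\<close> by (intro Max_in) auto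
  then obtain j0 where j0a: "j0 \<in> J" "c j0 = Max (c ` J)" by auto
  have j0: "j0 \<in> J" "\<forall>j\<in>J. c j \<le> c j0" using j0a Suc.prems(2) by auto
  have "i0 \<in> {i\<in>I. q i0 \<le> q i}" using i0 by simp
  hence "0 < card {i\<in>I. q i0 \<le> q i}" using Suc.prems(1) by (auto simp: card_gt_0_iff)
  hence "0 < card {j\<in>J. q i0 \<le> c j}" using Suc.prems(4)[of "q i0"] by linarith
  then obtain j where "j \<in> J" "q i0 \<le> c j" by (auto simp: card_gt_0_iff)
  hence qc: "q i0 \<le> c j0" using j0 by force
  have IH: "sum q (I - {i0}) \<le> sum c (J - {j0})"
  proof (rule Suc.hyps)
    show "n = card (I - {i0})" using Suc.hyps(2) i0 by simp
    show "finite (I - {i0})" "finite (J - {j0})" using Suc.prems by auto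
    show "card (I - {i0}) = card (J - {j0})" using Suc.prems i0 j0 by simp
    fix x
    show "card {i \<in> I - {i0}. x \<le> q i} \<le> card {j \<in> J - {j0}. x \<le> c j}"
    proof (cases "x \<le> q i0")
      case True
      have e1: "{i \<in> I - {i0}. x \<le> q i} = {i\<in>I. x \<le> q i} - {i0}" by auto
      have e2: "{j \<in> J - {j0}. x \<le> c j} = {j\<in>J. x \<le> c j} - {j0}" by auto
      have "card ({i\<in>I. x \<le> q i} - {i0}) = card {i\<in>I. x \<le> q i} - 1"
        using True i0 Suc.prems by (intro card_Diff_singleton) auto
      moreover have "card ({j\<in>J. x \<le> c j} - {j0}) = card {j\<in>J. x \<le> c j} - 1"
        using True j0 qc Suc.prems by (intro card_Diff_singleton) auto
      ultimately show ?thesis using e1 e2 Suc.prems(4)[of x] by simp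
    next
      case False
      hence "{i \<in> I - {i0}. x \<le> q i} = {}" using i0 by force
      thus ?thesis by (metis card.empty le0)
    qed
  qed
  have "sum q I = q i0 + sum q (I - {i0})" using Suc.prems i0 by (simp add: sum.remove)
  also have "\<dots> \<le> c j0 + sum c (J - {j0})" using qc IH by simp
  also have "\<dots> = sum c J" using Suc.prems j0 by (simp add: sum.remove)
  finally show ?case .
qed

theorem theorem11:
  fixes N :: "'a set" and M :: "'b set" and v :: "'b \<Rightarrow> real" and \<tau> :: real
    and n k :: nat
    and C :: "nat \<Rightarrow> 'a \<Rightarrow> 'b set" and \<sigma> :: "nat \<Rightarrow> 'a" and A :: "'a \<Rightarrow> 'b set"
  assumes "finite N" and "card N = n"
    and "finite M" and "card M = k * n"
    and "\<forall>g\<in>M. v g \<ge> 0"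
    and "0 \<le> \<tau>" and "\<tau> \<le> 1"
    and "greedy_run N M v \<tau> k C \<sigma> A"
  shows "balanced_allocation N M k A \<and>
         (\<forall>B. balanced_allocation N M k B \<longrightarrow> USW N v \<tau> B \<le> USW N v \<tau> A)"
proof -
  define kk where "kk = greedy_size k \<tau>"
  define P where "P = (\<lambda>t. M - (\<Union>s<t. C s (\<sigma> s)))"
  define N' where "N' = (\<lambda>t. N - \<sigma> ` {..<t})"
  have G: "\<forall>t < card N.
            \<sigma> t \<in> N' t \<and>
            (\<forall>i\<in>N' t. C t i \<subseteq> P t \<and> card (C t i) = kk \<and>
               (\<forall>S. S \<subseteq> P t \<and> card S = kk \<longrightarrow> (\<Sum>g\<in>S. v g) \<le> (\<Sum>g\<in>C t i. v g))) \<and>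
            (\<forall>i\<in>N' t. qval v \<tau> (C t i) \<le> qval v \<tau> (C t (\<sigma> t))) \<and>
            C t (\<sigma> t) \<subseteq> A (\<sigma> t)"
    and BA: "balanced_allocation N M k A"
    using assms(8) unfolding greedy_run_def Let_def kk_def P_def N'_def by meson+
  have Asub: "\<And>i. i \<in> N \<Longrightarrow> A i \<subseteq> M" and Acard: "\<And>i. i \<in> N \<Longrightarrow> card (A i) = k"
    using BA unfolding balanced_allocation_def is_allocation_def by auto
  have "\<forall>B. balanced_allocation N M k B \<longrightarrow> USW N v \<tau> B \<le> USW N v \<tau> A"
  proof (intro allI impI)
    fix B assume BB: "balanced_allocation N M k B"
    have Bsub: "\<And>i. i \<in> N \<Longrightarrow> B i \<subseteq> M" and Bcard: "\<And>i. i \<in> N \<Longrightarrow> card (B i) = k"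
      and Bdisj: "\<And>i j. i \<in> N \<Longrightarrow> j \<in> N \<Longrightarrow> i \<noteq> j \<Longrightarrow> B i \<inter> B j = {}"
      using BB unfolding balanced_allocation_def is_allocation_def by auto
    show "USW N v \<tau> B \<le> USW N v \<tau> A"
    proof (cases "k = 0")
      case True
      hence "M = {}" using assms(3,4) by simp
      hence "\<And>i. i \<in> N \<Longrightarrow> B i = {} \<and> A i = {}" using Asub Bsub by blast
      thus ?thesis unfolding USW_def qval_def by simp
    next
      case False
      hence k1: "1 \<le> k" by simp
      have kk1: "1 \<le> kk" and kkk: "kk \<le> k" using gs_props[OF k1 assms(6,7)] kk_def by auto
      have Gt: "\<sigma> t \<in> N' t \<and>
            (\<forall>i\<in>N' t. C t i \<subseteq> P t \<and> card (C t i) = kk \<and>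
               (\<forall>S. S \<subseteq> P t \<and> card S = kk \<longrightarrow> (\<Sum>g\<in>S. v g) \<le> (\<Sum>g\<in>C t i. v g))) \<and>
            (\<forall>i\<in>N' t. qval v \<tau> (C t i) \<le> qval v \<tau> (C t (\<sigma> t))) \<and>
            C t (\<sigma> t) \<subseteq> A (\<sigma> t)" if "t < n" for t
      proof -
        have "t < card N" using that assms(2) by simp
        thus ?thesis by (rule G[rule_format])
      qed
      have GsN': "\<sigma> t \<in> N' t" if "t < n" for t using conjunct1[OF Gt[OF that]] .
      have Gsig: "\<sigma> t \<in> N - \<sigma> ` {..<t}" if "t < n" for t using GsN'[OF that] unfolding N'_def .
      have sigN: "\<And>t. t < n \<Longrightarrow> \<sigma> t \<in> N" using Gsig by blast
      have inj: "inj_on \<sigma> {..<n}"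
      proof (rule inj_onI)
        fix s t assume st: "s \<in> {..<n}" "t \<in> {..<n}" "\<sigma> s = \<sigma> t"
        show "s = t"
        proof (rule ccontr)
          assume "s \<noteq> t"
          hence "s < t \<or> t < s" by auto
          thus False
          proof
            assume "s < t"
            hence "\<sigma> t \<in> \<sigma> ` {..<t}" using st(3) by (metis imageI lessThan_iff)
            thus False using Gsig[of t] st(2) by simp
          next
            assume "t < s"
            hence "\<sigma> s \<in> \<sigma> ` {..<s}" using st(3) by (metis imageI lessThan_iff)
            thus False using Gsig[of s] st(1) by simp
          qed
        qed
      qed
      have img: "\<sigma> ` {..<n} = N"
      proof -
        have "\<sigma> ` {..<n} \<subseteq> N" using sigN by auto
        moreover have "card (\<sigma> ` {..<n}) = card N" using inj assms(2) by (simp add: card_image)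
        ultimately show ?thesis using assms(1) by (simp add: card_subset_eq)
      qed
      have reidx: "USW N v \<tau> A = (\<Sum>t<n. qval v \<tau> (A (\<sigma> t)))"
        unfolding USW_def using sum.reindex[OF inj, of "\<lambda>i. qval v \<tau> (A i)"] img by simp
      have Ct: "(C t (\<sigma> t) \<subseteq> P t \<and> card (C t (\<sigma> t)) = kk \<and>
               (\<forall>S. S \<subseteq> P t \<and> card S = kk \<longrightarrow> (\<Sum>g\<in>S. v g) \<le> (\<Sum>g\<in>C t (\<sigma> t). v g)))
               \<and> C t (\<sigma> t) \<subseteq> A (\<sigma> t)" if tn: "t < n" for t
      proof (rule conjI)
        show "C t (\<sigma> t) \<subseteq> P t \<and> card (C t (\<sigma> t)) = kk \<and>
               (\<forall>S. S \<subseteq> P t \<and> card S = kk \<longrightarrow> (\<Sum>g\<in>S. v g) \<le> (\<Sum>g\<in>C t (\<sigma> t). v g))"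
          using bspec[OF conjunct1[OF conjunct2[OF Gt[OF tn]]] GsN'[OF tn]] .
        show "C t (\<sigma> t) \<subseteq> A (\<sigma> t)"
          using conjunct2[OF conjunct2[OF conjunct2[OF Gt[OF tn]]]] .
      qed
      have "USW N v \<tau> B \<le> (\<Sum>t<n. qval v \<tau> (A (\<sigma> t)))"
        unfolding USW_def
      proof (rule sum_le_by_counts)
        show "finite N" "finite {..<n}" "card N = card {..<n}" using assms(1,2) by auto
        fix x
        define Nx where "Nx = {i\<in>N. x \<le> qval v \<tau> (B i)}"
        define m where "m = card Nx"
        have "card Nx \<le> card N" unfolding Nx_def using assms(1) by (intro card_mono) auto
        hence mn: "m \<le> n" unfolding m_def using assms(2) by simp
        have key: "x \<le> qval v \<tau> (A (\<sigma> t))" if tm: "t < m" for t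
        proof -
          have tn: "t < n" using tm mn by simp
          have allx: "\<forall>g\<in>C t (\<sigma> t). x \<le> v g"
          proof (rule ccontr)
            assume "\<not> (\<forall>g\<in>C t (\<sigma> t). x \<le> v g)"
            then obtain g where g: "g \<in> C t (\<sigma> t)" "v g < x" by (auto simp: not_le)
            define H where "H = {g\<in>M. x \<le> v g}"
            define U where "U = (\<Union>s<t. C s (\<sigma> s))"
            have finH: "finite H" using assms(3) H_def by simp
            have "(\<Union>i\<in>Nx. {g\<in>B i. x \<le> v g}) \<subseteq> H" using Bsub unfolding H_def Nx_def by blast
            hence "card (\<Union>i\<in>Nx. {g\<in>B i. x \<le> v g}) \<le> card H" using finH by (simp add: card_mono)
            moreover have "card (\<Union>i\<in>Nx. {g\<in>B i. x \<le> v g}) = (\<Sum>i\<in>Nx. card {g\<in>B i. x \<le> v g})"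
            proof (rule card_UN_disjoint)
              show "finite Nx" unfolding Nx_def using assms(1) by simp
              show "\<forall>i\<in>Nx. finite {g\<in>B i. x \<le> v g}"
              proof
                fix i assume "i \<in> Nx"
                hence "i \<in> N" by (simp add: Nx_def)
                hence "finite (B i)" using Bsub assms(3) finite_subset by blast
                thus "finite {g\<in>B i. x \<le> v g}" by simp
              qed
              show "\<forall>i\<in>Nx. \<forall>j\<in>Nx. i \<noteq> j \<longrightarrow> {g\<in>B i. x \<le> v g} \<inter> {g\<in>B j. x \<le> v g} = {}"
                using Bdisj unfolding Nx_def by blast
            qed
            moreover have "(\<Sum>i\<in>Nx. card {g\<in>B i. x \<le> v g}) \<ge> (\<Sum>i\<in>Nx. kk)"
            proof (rule sum_mono)
              fix i assume i: "i \<in> Nx"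
              hence iN: "i \<in> N" and xq: "x \<le> qval v \<tau> (B i)" unfolding Nx_def by auto
              have fB: "finite (B i)" using Bsub[OF iN] assms(3) by (rule finite_subset)
              have "kk \<le> card {g\<in>B i. qval v \<tau> (B i) \<le> v g}"
                using qval_count(1)[OF fB Bcard[OF iN] k1 assms(6,7)] kk_def by simp
              also have "\<dots> \<le> card {g\<in>B i. x \<le> v g}"
                using fB xq by (intro card_mono) auto
              finally show "kk \<le> card {g\<in>B i. x \<le> v g}" .
            qed
            ultimately have cH: "m * kk \<le> card H" unfolding m_def by simp
            have "card U \<le> (\<Sum>s<t. card (C s (\<sigma> s)))" unfolding U_def by (rule card_UN_le) simp
            also have "\<dots> = (\<Sum>s<t. kk)" by (rule sum.cong) (use Ct tn in auto)
            also have "\<dots> = t * kk" by simp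
            finally have cU: "card U \<le> t * kk" .
            have finU: "finite U" unfolding U_def
            proof (rule finite_UN_I)
              show "finite {..<t}" by simp
              fix s assume "s \<in> {..<t}"
              hence "s < n" using tn by simp
              hence "card (C s (\<sigma> s)) = kk" using Ct by simp
              thus "finite (C s (\<sigma> s))" using kk1 by (intro card_ge_0_finite) simp
            qed
            have "card H - card U \<le> card (H - U)" by (rule diff_card_le_card_Diff) (rule finU)
            hence "(m - t) * kk \<le> card (H - U)" using cH cU by (simp add: diff_mult_distrib)
            moreover have "kk \<le> (m - t) * kk" using tm by (simp add: Suc_le_eq)
            ultimately have cHU: "kk \<le> card (H - U)" by linarith
            have CP: "C t (\<sigma> t) \<subseteq> P t" and cC: "card (C t (\<sigma> t)) = kk"
              and mx: "\<forall>S. S \<subseteq> P t \<and> card S = kk \<longrightarrow> (\<Sum>g\<in>S. v g) \<le> (\<Sum>g\<in>C t (\<sigma> t). v g)"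
              using Ct[OF tn] by auto
            have finC: "finite (C t (\<sigma> t))" by (rule card_ge_0_finite) (use cC kk1 in simp)
            have "\<not> H - U \<subseteq> C t (\<sigma> t)"
            proof
              assume sub: "H - U \<subseteq> C t (\<sigma> t)"
              have "g \<notin> H - U" using g H_def by auto
              hence "H - U \<subset> C t (\<sigma> t)" using sub g by auto
              hence "card (H - U) < card (C t (\<sigma> t))" using finC by (simp add: psubset_card_mono)
              thus False using cHU cC by simp
            qed
            then obtain h where h: "h \<in> H - U" "h \<notin> C t (\<sigma> t)" by auto
            define S where "S = insert h (C t (\<sigma> t) - {g})"
            have "S \<subseteq> P t" using CP h unfolding S_def P_def U_def H_def by auto
            moreover have "card S = kk" unfolding S_def using h g finC cC kk1 by simp
            ultimately have le: "(\<Sum>g\<in>S. v g) \<le> (\<Sum>g\<in>C t (\<sigma> t). v g)" using mx by blast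
            have "(\<Sum>g\<in>S. v g) = v h + (\<Sum>g\<in>C t (\<sigma> t) - {g}. v g)"
              unfolding S_def using h finC by simp
            also have "(\<Sum>g\<in>C t (\<sigma> t) - {g}. v g) = (\<Sum>g\<in>C t (\<sigma> t). v g) - v g"
              using finC g by (simp add: sum_diff1)
            finally have "(\<Sum>g\<in>S. v g) = v h + (\<Sum>g\<in>C t (\<sigma> t). v g) - v g" by simp
            moreover have "x \<le> v h" using h H_def by simp
            ultimately show False using le g by simp
          qed
          have iN: "\<sigma> t \<in> N" using sigN tn .
          have fA: "finite (A (\<sigma> t))" using Asub[OF iN] assms(3) by (rule finite_subset)
          have "kk = card (C t (\<sigma> t))" using Ct[OF tn] by simp
          also have "\<dots> \<le> card {g\<in>A (\<sigma> t). x \<le> v g}"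
            using Ct[OF tn] allx fA by (intro card_mono) auto
          finally show ?thesis
            using qval_count(2)[OF fA Acard[OF iN] k1 assms(6,7)] kk_def by simp
        qed
        have "{..<m} \<subseteq> {t\<in>{..<n}. x \<le> qval v \<tau> (A (\<sigma> t))}" using key mn by auto
        hence "card {..<m} \<le> card {t\<in>{..<n}. x \<le> qval v \<tau> (A (\<sigma> t))}"
          by (intro card_mono) auto
        thus "card {i\<in>N. x \<le> qval v \<tau> (B i)} \<le> card {t\<in>{..<n}. x \<le> qval v \<tau> (A (\<sigma> t))}"
          unfolding m_def Nx_def by simp
      qed
      thus ?thesis using reidx by simp
    qed
  qed
  thus ?thesis using BA by simp
qed

end
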